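(* For $n\ge2$ and all $P,Q\in\Gamma_n$, $T(P\|Q)\le \frac1{16}\Psi(P\|Q)$.
   Context: $\Gamma_n=\{P=(p_1,\dots,p_n): p_i>0,\ \sum p_i=1\}$. $T(P\|Q)=\sum_{i=1}^n\frac{p_i+q_i}{2}\ln\frac{p_i+q_i}{2\sqrt{p_iq_i}}$ (natural logarithm); $\Psi(P\|Q)=\sum_{i=1}^n\frac{(p_i-q_i)^2(p_i+q_i)}{p_iq_i}$. *)

theory Defs
  imports Complex_Main
begin

definition Gamma :: "nat \<Rightarrow> (nat \<Rightarrow> real) set" where
  "Gamma n = {p. (\<forall>i<n. p i > 0) \<and> (\<Sum>i<n. p i) = 1}"

definition T_div :: "nat \<Rightarrow> (nat \<Rightarrow> real) \<Rightarrow> (nat \<Rightarrow> real) \<Rightarrow> real" where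
  "T_div n p q = (\<Sum>i<n. (p i + q i) / 2 * ln ((p i + q i) / (2 * sqrt (p i * q i))))"

definition Psi_div :: "nat \<Rightarrow> (nat \<Rightarrow> real) \<Rightarrow> (nat \<Rightarrow> real) \<Rightarrow> real" where
  "Psi_div n p q = (\<Sum>i<n. (p i - q i)^2 * (p i + q i) / (p i * q i))"

end

theory Submission
  imports Defs
begin

lemma term_le:
  fixes x y :: real
  assumes x: "x > 0" and y: "y > 0"
  shows "(x^2+y^2)/2 * ln ((x^2+y^2)/(2*(x*y))) \<le> (x^2-y^2)^2*(x^2+y^2)/(x^2*y^2) / 16"
proof -
  have pos: "(x^2+y^2)/(2*(x*y)) > 0" using x y by (simp add: add_pos_pos)
  have s: "(x^2+y^2)/2 \<ge> 0" by simp
  have "(x^2+y^2)/2 * ln ((x^2+y^2)/(2*(x*y))) \<le> (x^2+y^2)/2 * ((x^2+y^2)/(2*(x*y)) - 1)"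
    using ln_le_minus_one[OF pos] s by (rule mult_left_mono)
  also have "\<dots> = (x^2+y^2)*(x-y)^2/(4*x*y)" using x y by (simp add: field_simps power2_eq_square)
  also have "\<dots> \<le> (x^2-y^2)^2*(x^2+y^2)/(x^2*y^2) / 16"
  proof -
    have a0: "(x+y)^2 - 4*x*y = (x-y)^2" by (simp add: power2_eq_square algebra_simps)
    have a: "4*x*y \<le> (x+y)^2" using a0 zero_le_power2[of "x-y"] by linarith
    have b: "(x^2+y^2)*(x-y)^2 \<ge> 0" by simp
    have "(x^2+y^2)*(x-y)^2/(4*x*y) = (x^2+y^2)*(x-y)^2*(4*x*y)/(16*x^2*y^2)"
      using x y by (simp add: field_simps power2_eq_square)
    also have "\<dots> \<le> (x^2+y^2)*(x-y)^2*(x+y)^2/(16*x^2*y^2)"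
      using x y a b by (intro divide_right_mono mult_left_mono) auto
    also have "\<dots> = (x^2-y^2)^2*(x^2+y^2)/(x^2*y^2) / 16"
    proof -
      have "(x-y)^2*(x+y)^2 = (x^2-y^2)^2" by (simp add: power2_eq_square algebra_simps)
      then show ?thesis by (simp add: mult.commute mult.left_commute)
    qed
    finally show ?thesis .
  qed
  finally show ?thesis .
qed

lemma term_le2:
  fixes a b :: real
  assumes "a > 0" "b > 0"
  shows "(a + b) / 2 * ln ((a + b) / (2 * sqrt (a * b))) \<le> (a - b)^2 * (a + b) / (a * b) / 16"
proof -
  define x where "x = sqrt a"
  define y where "y = sqrt b"
  have x: "x > 0" "x^2 = a" using assms by (auto simp: x_def)
  have y: "y > 0" "y^2 = b" using assms by (auto simp: y_def)
  have "sqrt (a*b) = x*y" by (simp add: x_def y_def real_sqrt_mult)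
  then show ?thesis using term_le[OF x(1) y(1)] x y by simp
qed

theorem proposition3p5:
  fixes n :: nat and p q :: "nat \<Rightarrow> real"
  assumes "n \<ge> 2" and "p \<in> Gamma n" and "q \<in> Gamma n"
  shows "T_div n p q \<le> Psi_div n p q / 16"
proof -
  have "T_div n p q \<le> (\<Sum>i<n. (p i - q i)^2 * (p i + q i) / (p i * q i) / 16)"
    unfolding T_div_def
    using assms(2,3) by (intro sum_mono term_le2) (auto simp: Gamma_def)
  also have "\<dots> = Psi_div n p q / 16" unfolding Psi_div_def by (simp add: sum_divide_distrib)
  finally show ?thesis .
qed

end
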